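(* If $f(z)=z+\sum_{n\ge2}a_nz^n$ belongs to $\mathcal{K}_{\sigma}$, then $|a_2a_4-a_3^2|\le\frac{1}{3}$.
   Context: $\mathbb{U}=\{z\in\mathbb{C}:|z|<1\}$. $\sigma$ denotes the class of analytic functions $f(z)=z+\sum_{n\ge2}a_nz^n$ on $\mathbb{U}$ that are univalent in $\mathbb{U}$ and whose inverse $g=f^{-1}$ is also univalent in $\mathbb{U}$. $\mathcal{K}_{\sigma}$ (bi-convex functions) is the set of $f\in\sigma$ with $\operatorname{Re}\left(1+\frac{zf''(z)}{f'(z)}\right)>0$ for $z\in\mathbb{U}$ and $\operatorname{Re}\left(1+\frac{wg''(w)}{g'(w)}\right)>0$ for $w\in\mathbb{U}$, where $g=f^{-1}$. *)

theory Defs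
  imports "HOL-Complex_Analysis.Complex_Analysis"
begin

definition unit_disc :: "complex set" where
  "unit_disc = ball 0 1"

definition normalized_univalent :: "(complex \<Rightarrow> complex) \<Rightarrow> bool" where
  "normalized_univalent f \<longleftrightarrow>
     f holomorphic_on unit_disc \<and> inj_on f unit_disc \<and> f 0 = 0 \<and> deriv f 0 = 1"

text \<open>g is (the univalent analytic continuation to the unit disc of) the inverse of f:
  g is holomorphic and univalent on the disc and inverts f near the origin.\<close>
definition is_univalent_inverse ::
  "(complex \<Rightarrow> complex) \<Rightarrow> (complex \<Rightarrow> complex) \<Rightarrow> bool" where
  "is_univalent_inverse f g \<longleftrightarrow>
     g holomorphic_on unit_disc \<and> inj_on g unit_disc \<and>
     (\<exists>r>0. \<forall>w\<in>ball 0 r. g w \<in> unit_disc \<and> f (g w) = w)"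

definition bi_univalent :: "(complex \<Rightarrow> complex) \<Rightarrow> bool" where
  "bi_univalent f \<longleftrightarrow> normalized_univalent f \<and> (\<exists>g. is_univalent_inverse f g)"

definition convex_cond :: "(complex \<Rightarrow> complex) \<Rightarrow> bool" where
  "convex_cond h \<longleftrightarrow>
     (\<forall>z\<in>unit_disc. Re (1 + z * deriv (deriv h) z / deriv h z) > 0)"

definition bi_convex :: "(complex \<Rightarrow> complex) \<Rightarrow> bool" where
  "bi_convex f \<longleftrightarrow> normalized_univalent f \<and> convex_cond f \<and>
     (\<exists>g. is_univalent_inverse f g \<and> convex_cond g)"

definition taylor_coeff :: "(complex \<Rightarrow> complex) \<Rightarrow> nat \<Rightarrow> complex" where
  "taylor_coeff f n = (deriv ^^ n) f 0 / of_nat (fact n)"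

end

theory Submission imports Defs begin

lemma hd_deriv: "(deriv^^k) (deriv f) = (deriv^^(Suc k)) f"
  by (simp only: funpow_Suc_right o_apply)

lemma hd_deriv2: "(deriv^^k) (deriv (deriv f)) = (deriv^^(Suc (Suc k))) f"
  by (simp only: hd_deriv)

lemma zD: "(of_nat k :: complex) * (deriv^^(k-1)) (deriv (deriv f)) 0 = of_nat k * (deriv^^(k+1)) f 0"
  by (cases k) (simp_all del: funpow.simps add: hd_deriv2)

lemma mult_lt1: "0 \<le> (a::real) \<Longrightarrow> a < 1 \<Longrightarrow> 0 \<le> b \<Longrightarrow> b < 1 \<Longrightarrow> a * b < 1"
  using mult_left_le_one_le[of a b] by (simp add: mult.commute)

lemma final_bound:
  fixes A B c :: complex
  assumes "cmod A \<le> 24" "cmod B \<le> 24" "cmod c \<le> 2"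
  shows "cmod (A / 16 + B / 24 - 7 / 2 * (c / 2) ^ 2) \<le> 6"
proof -
  have "cmod (A / 16 + B / 24 - 7 / 2 * (c / 2) ^ 2) \<le> cmod (A / 16) + cmod (B / 24) + cmod (7 / 2 * (c / 2) ^ 2)"
    using norm_triangle_ineq4[of "A / 16 + B / 24" "7 / 2 * (c / 2) ^ 2"] norm_triangle_ineq[of "A / 16" "B / 24"]
    by linarith
  also have "\<dots> = cmod A / 16 + cmod B / 24 + 7 / 2 * (cmod c / 2) ^ 2"
    by (simp add: norm_divide norm_mult norm_power)
  also have "(cmod c / 2) ^ 2 \<le> 1" using assms(3) by (simp add: power_le_one)
  finally show ?thesis using assms(1,2) by linarith
qed

lemma ident_alg:
  fixes d2 d3 d4 w1 w2 w3 :: complex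
  assumes "d2 = 2 * w1" "d3 = w2 + 6 * w1 ^ 2" "d4 = (12 * w1 * d3 + 9 * w2 * d2 + 2 * w3) / 3"
  shows "18 * (d2 / 2 * (d4 / 24) - (d3 / 6)\<^sup>2) =
      (8 * w1 * w3 + 6 * w2 ^ 2) / 16 + (36 * w1 ^ 2 * w2) / 24 - 7 / 2 * (w2 / 2) ^ 2"
  unfolding assms(3) unfolding assms(1,2) by (simp add: field_simps power2_eq_square power3_eq_cube)

lemma hd_zmult:
  fixes F :: "complex \<Rightarrow> complex"
  assumes "F holomorphic_on S" "open S" "0 \<in> S"
  shows "(deriv^^k) (\<lambda>z. z * F z) 0 = of_nat k * (deriv^^(k-1)) F 0"
proof -
  have "(deriv^^k) (\<lambda>z. z * F z) 0 =
     (\<Sum>i = 0..k. of_nat (k choose i) * (deriv ^^ i) (\<lambda>z. z) 0 * (deriv ^^ (k-i)) F 0)"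
    by (rule higher_deriv_mult[OF _ assms(1-3)]) auto
  also have "\<dots> = (\<Sum>i = 0..k. if i = 1 then of_nat k * (deriv^^(k-1)) F 0 else 0)"
    by (rule sum.cong) auto
  also have "\<dots> = (if k = 0 then 0 else of_nat k * (deriv^^(k-1)) F 0)"
    by (cases k) auto
  also have "\<dots> = of_nat k * (deriv^^(k-1)) F 0" by auto
  finally show ?thesis .
qed

lemma coeff_bound:
  fixes \<phi> :: "complex \<Rightarrow> complex"
  assumes hol: "\<phi> holomorphic_on ball 0 1" and bd: "\<And>z. z \<in> ball 0 1 \<Longrightarrow> cmod (\<phi> z) < 1"
    and n: "n > 0"
  shows "cmod ((deriv^^n) \<phi> 0) \<le> fact n"
proof -
  have le: "cmod ((deriv^^n) \<phi> 0) \<le> fact n * 1 / r^n" if r: "0 < r" "r < 1" for r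
  proof (rule Cauchy_higher_deriv_bound[where y=0])
    show "\<phi> holomorphic_on ball 0 r" using hol by (rule holomorphic_on_subset) (use r in auto)
    show "continuous_on (cball 0 r) \<phi>"
      using holomorphic_on_imp_continuous_on[OF hol] by (rule continuous_on_subset) (use r in auto)
    show "\<And>w. w \<in> ball 0 r \<Longrightarrow> \<phi> w \<in> ball 0 1" using bd r by auto
  qed (use r n in auto)
  have "((\<lambda>r::real. fact n * 1 / r^n) \<longlongrightarrow> fact n * 1 / 1^n) (at_left 1)"
    by (intro tendsto_intros) auto
  then have lim: "((\<lambda>r::real. fact n * 1 / r^n) \<longlongrightarrow> fact n) (at_left 1)" by simp
  have ev: "eventually (\<lambda>r::real. 0 < r \<and> r < 1) (at_left 1)"
    by (rule eventually_mono[OF eventually_at_left_real[of 0 1]]) auto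
  show ?thesis
  proof (rule tendsto_le[OF _ lim tendsto_const])
    show "\<forall>\<^sub>F r in at_left 1. cmod ((deriv ^^ n) \<phi> 0) \<le> fact n * 1 / r ^ n"
      using ev by (rule eventually_mono) (use le in blast)
  qed simp
qed

lemma sum4: "(\<Sum>i = 0..(4::nat). of_nat (4 choose i) * (x::nat\<Rightarrow>complex) i) = x 0 + 4 * x 1 + 6 * x 2 + 4 * x 3 + x 4"
  by (simp add: eval_nat_numeral)

lemma norm_ratio:
  fixes q :: complex
  assumes "Re q > -1"
  shows "cmod (q / (2 + q)) < 1" "2 + q \<noteq> 0"
proof -
  show nz: "2 + q \<noteq> 0" using assms by (auto simp: complex_eq_iff)
  have "(cmod q)^2 < (cmod (2+q))^2"
    using assms unfolding cmod_power2 by (simp add: power2_eq_square algebra_simps)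
  then have "cmod q < cmod (2+q)" by (simp add: power_less_imp_less_base)
  then show "cmod (q / (2 + q)) < 1" using nz by (simp add: norm_divide divide_less_eq)
qed

theorem corollary4p7:
  fixes f :: "complex \<Rightarrow> complex"
  assumes "bi_convex f"
  shows "cmod (taylor_coeff f 2 * taylor_coeff f 4 - (taylor_coeff f 3)\<^sup>2) \<le> 1 / 3"
proof -
  define S where "S = ball (0::complex) 1"
  have S: "open S" "0 \<in> S" by (auto simp: S_def)
  from assms have hol: "f holomorphic_on S" and inj: "inj_on f S" and d1: "deriv f 0 = 1"
    and cc: "\<And>z. z \<in> S \<Longrightarrow> Re (1 + z * deriv (deriv f) z / deriv f z) > 0"
    by (auto simp: bi_convex_def normalized_univalent_def convex_cond_def unit_disc_def S_def)
  have h1: "deriv f holomorphic_on S" by (rule holomorphic_deriv[OF hol S(1)])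
  have h2: "deriv (deriv f) holomorphic_on S" by (rule holomorphic_deriv[OF h1 S(1)])
  have nz: "deriv f z \<noteq> 0" if "z \<in> S" for z
    using holomorphic_injective_imp_regular[OF hol S(1) inj that] .
  define q where "q z = z * deriv (deriv f) z / deriv f z" for z
  define H where "H = (\<lambda>z. 2 * deriv f z + z * deriv (deriv f) z)"
  define G where "G = (\<lambda>z. z * deriv (deriv f) z)"
  define w where "w = (\<lambda>z. G z / H z)"
  have Hq: "H z = deriv f z * (2 + q z)" if "z \<in> S" for z
    using nz[OF that] by (simp add: H_def q_def field_simps)
  have wq: "w z = q z / (2 + q z)" if "z \<in> S" for z
    using nz[OF that] by (simp add: w_def H_def G_def q_def field_simps)
  have Req: "Re (q z) > -1" if "z \<in> S" for z using cc[OF that] by (simp add: q_def)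
  have Hnz: "H z \<noteq> 0" if "z \<in> S" for z
    using Hq[OF that] nz[OF that] norm_ratio(2)[OF Req[OF that]] by simp
  have wb: "cmod (w z) < 1" if "z \<in> S" for z
    using wq[OF that] norm_ratio(1)[OF Req[OF that]] by simp
  have hH: "H holomorphic_on S" unfolding H_def by (intro holomorphic_intros h1 h2)
  have hG: "G holomorphic_on S" unfolding G_def by (intro holomorphic_intros h1 h2)
  have hw: "w holomorphic_on S" unfolding w_def by (intro holomorphic_intros hH hG) (use Hnz in auto)
  have w0: "w 0 = 0" by (simp add: w_def G_def)
  define D where "D k = (deriv^^k) f 0" for k
  define W where "W k = (deriv^^k) w 0" for k
  have HD: "(deriv^^k) H 0 = of_nat (k+2) * D (k+1)" for k
  proof -
    have "(deriv^^k) H 0 = (deriv^^k) (\<lambda>z. 2 * deriv f z) 0 + (deriv^^k) (\<lambda>z. z * deriv (deriv f) z) 0"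
      unfolding H_def by (rule higher_deriv_add[where S=S]) (auto intro!: holomorphic_intros h1 h2 S)
    also have "(deriv^^k) (\<lambda>z. 2 * deriv f z) 0 = 2 * D (k+1)"
      using higher_deriv_cmult[OF h1 S(2) S(1)] by (simp add: D_def hd_deriv)
    also have "(deriv^^k) (\<lambda>z. z * deriv (deriv f) z) 0 = of_nat k * D (k+1)"
      unfolding hd_zmult[OF h2 S(1) S(2)] zD D_def ..
    finally show ?thesis by (simp add: algebra_simps)
  qed
  have GD: "(deriv^^k) G 0 = of_nat k * D (k+1)" for k
    unfolding G_def hd_zmult[OF h2 S(1) S(2)] zD D_def ..
  have eqn: "(deriv^^k) (\<lambda>z. w z * H z) 0 = (deriv^^k) G 0" for k
  proof (rule higher_deriv_transform_within_open[OF _ hG S(1) S(2)])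
    show "(\<lambda>z. w z * H z) holomorphic_on S" by (intro holomorphic_intros hw hH)
    show "\<And>z. z \<in> S \<Longrightarrow> w z * H z = G z" using Hnz by (simp add: w_def)
  qed
  have leib: "(deriv^^k) (\<lambda>z. w z * H z) 0 = (\<Sum>i = 0..k. of_nat (k choose i) * W i * (of_nat (k - i + 2) * D (k - i + 1)))" for k
    by (subst higher_deriv_mult[OF hw hH S]) (simp add: W_def HD)
  have W0: "W 0 = 0" by (simp add: W_def w0)
  have D1: "D 1 = 1" by (simp add: D_def d1)
  have e1: "2 * W 1 = D 2" using eqn[of 1] leib[of 1] GD[of 1] W0 D1
    by (simp add: eval_nat_numeral algebra_simps)
  have e2: "6 * W 1 * D 2 + 2 * W 2 = 2 * D 3" using eqn[of 2] leib[of 2] GD[of 2] W0 D1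
    by (simp add: eval_nat_numeral algebra_simps)
  have e3: "12 * W 1 * D 3 + 9 * W 2 * D 2 + 2 * W 3 = 3 * D 4" using eqn[of 3] leib[of 3] GD[of 3] W0 D1
    by (simp add: eval_nat_numeral algebra_simps)
  have hww: "(\<lambda>z. w z * w z) holomorphic_on S" by (intro holomorphic_intros hw)
  have V: "(deriv^^k) (\<lambda>z. w z * w z) 0 = (\<Sum>i = 0..k. of_nat (k choose i) * W i * W (k - i))" for k
    by (subst higher_deriv_mult[OF hw hw S]) (simp add: W_def)
  have V4: "(deriv^^4) (\<lambda>z. w z * w z) 0 = 8 * W 1 * W 3 + 6 * W 2 ^ 2"
    using V[of 4] W0 by (simp add: eval_nat_numeral algebra_simps power2_eq_square)
  have T4: "(deriv^^4) (\<lambda>z. w z * (w z * w z)) 0 = 36 * W 1 ^ 2 * W 2"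
  proof -
    have "(deriv^^4) (\<lambda>z. w z * (w z * w z)) 0 = (\<Sum>i = 0..4. of_nat (4 choose i) * W i * (deriv^^(4-i)) (\<lambda>z. w z * w z) 0)"
      by (subst higher_deriv_mult[OF hw hww S]) (simp add: W_def)
    then show ?thesis using V W0 by (simp add: eval_nat_numeral algebra_simps power2_eq_square)
  qed
  have bw: "cmod (w z) < 1" if "z \<in> ball 0 1" for z using wb that by (simp add: S_def)
  have bw2: "cmod (w z * w z) < 1" if "z \<in> ball 0 1" for z
    using bw[OF that] unfolding norm_mult by (intro mult_lt1) auto
  have bw3: "cmod (w z * (w z * w z)) < 1" if "z \<in> ball 0 1" for z
    using bw[OF that] bw2[OF that] unfolding norm_mult[of "w z"] by (intro mult_lt1) auto
  have hw': "w holomorphic_on ball 0 1" using hw by (simp add: S_def)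
  have hww': "(\<lambda>z. w z * w z) holomorphic_on ball 0 1" using hww by (simp add: S_def)
  have hwww': "(\<lambda>z. w z * (w z * w z)) holomorphic_on ball 0 1" using hw' by (intro holomorphic_intros)
  have cW2: "cmod (W 2) \<le> 2" using coeff_bound[OF hw' bw, of 2] by (simp add: W_def)
  have cV: "cmod (8 * W 1 * W 3 + 6 * W 2 ^ 2) \<le> 24"
    using coeff_bound[OF hww' bw2, of 4] V4 by (simp add: fact_numeral)
  have cT: "cmod (36 * W 1 ^ 2 * W 2) \<le> 24"
    using coeff_bound[OF hwww' bw3, of 4] T4 by (simp add: fact_numeral)
  have tc: "taylor_coeff f 2 = D 2 / 2" "taylor_coeff f 3 = D 3 / 6" "taylor_coeff f 4 = D 4 / 24"
    by (simp_all add: taylor_coeff_def D_def fact_numeral)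
  have d2: "D 2 = 2 * W 1" using e1 by simp
  have "2 * D 3 = 2 * (W 2 + 6 * W 1 ^ 2)" using e2 d2 by (simp add: algebra_simps power2_eq_square)
  then have d3: "D 3 = W 2 + 6 * W 1 ^ 2" by (metis mult_left_cancel zero_neq_numeral)
  have d4: "D 4 = (12 * W 1 * D 3 + 9 * W 2 * D 2 + 2 * W 3) / 3" using e3 by simp
  have ident: "18 * (taylor_coeff f 2 * taylor_coeff f 4 - (taylor_coeff f 3)\<^sup>2) =
      (8 * W 1 * W 3 + 6 * W 2 ^ 2) / 16 + (36 * W 1 ^ 2 * W 2) / 24 - 7 / 2 * (W 2 / 2) ^ 2"
    unfolding tc by (rule ident_alg[OF d2 d3 d4])
  have "cmod (18 * (taylor_coeff f 2 * taylor_coeff f 4 - (taylor_coeff f 3)\<^sup>2)) \<le> 6"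
    unfolding ident by (rule final_bound[OF cV cT cW2])
  then show ?thesis by (simp only: norm_mult) simp
qed

end
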